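(* Let $n\ge 2$, $1\le r\le n-1$, and let $h(q)=q^n+q^ra_r+q^{r-1}a_{r-1}+\dots+qa_1+a_0$ with $a_0,\dots,a_r\in\mathbb{H}$ and $a_r\neq 0$. Put $\lambda=\big(\max_{0\le j\le r}|a_j|\big)^{1/n}$. Then every zero $q\in\mathbb{H}$ of $h$ satisfies $$|q|\le \lambda+\max\{\lambda^2,\lambda^{r+1}\}.$$
   Context: $\mathbb{H}$ denotes the real quaternions with the Euclidean norm $|q|=\sqrt{q\bar q}$. The polynomial $h$ (whose coefficients of $q^{r+1},\dots,q^{n-1}$ vanish) has coefficients written to the right of the powers and is evaluated at $q\in\mathbb{H}$ by direct substitution, $h(q)=q^n+q^ra_r+\dots+qa_1+a_0$; a zero of $h$ is a $q\in\mathbb{H}$ with $h(q)=0$. *)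

theory Defs
  imports Complex_Main
begin

text \<open>Real quaternions q = Re + Im1 i + Im2 j + Im3 k, with Hamilton's multiplication
  (i^2 = j^2 = k^2 = ijk = -1).\<close>

datatype quat = Quat (qRe: real) (qIm1: real) (qIm2: real) (qIm3: real)

definition qzero :: quat where "qzero = Quat 0 0 0 0"
definition qone :: quat where "qone = Quat 1 0 0 0"

definition qadd :: "quat \<Rightarrow> quat \<Rightarrow> quat" where
  "qadd p q = Quat (qRe p + qRe q) (qIm1 p + qIm1 q) (qIm2 p + qIm2 q) (qIm3 p + qIm3 q)"

definition qmult :: "quat \<Rightarrow> quat \<Rightarrow> quat" where
  "qmult p q = Quat
     (qRe p * qRe q - qIm1 p * qIm1 q - qIm2 p * qIm2 q - qIm3 p * qIm3 q)
     (qRe p * qIm1 q + qIm1 p * qRe q + qIm2 p * qIm3 q - qIm3 p * qIm2 q)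
     (qRe p * qIm2 q - qIm1 p * qIm3 q + qIm2 p * qRe q + qIm3 p * qIm1 q)
     (qRe p * qIm3 q + qIm1 p * qIm2 q - qIm2 p * qIm1 q + qIm3 p * qRe q)"

definition qnorm :: "quat \<Rightarrow> real" where
  "qnorm q = sqrt ((qRe q)\<^sup>2 + (qIm1 q)\<^sup>2 + (qIm2 q)\<^sup>2 + (qIm3 q)\<^sup>2)"

primrec qpow :: "quat \<Rightarrow> nat \<Rightarrow> quat" where
  "qpow q 0 = qone"
| "qpow q (Suc m) = qmult q (qpow q m)"

definition heval :: "nat \<Rightarrow> nat \<Rightarrow> (nat \<Rightarrow> quat) \<Rightarrow> quat \<Rightarrow> quat" where
  "heval n r a q = qadd (qpow q n) (foldr (\<lambda>j acc. qadd (qmult (qpow q j) (a j)) acc) [0..<Suc r] qzero)"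

end

theory Submission
  imports Defs "HOL-Analysis.Analysis"
begin

definition qv :: "quat \<Rightarrow> complex \<times> complex" where
  "qv p = (Complex (qRe p) (qIm1 p), Complex (qIm2 p) (qIm3 p))"

lemma qnorm_qv: "qnorm p = norm (qv p)"
  unfolding qnorm_def qv_def norm_prod_def by (simp add: cmod_def add.assoc)

lemma qnorm_add: "qnorm (qadd p q) \<le> qnorm p + qnorm q"
proof -
  have "qv (qadd p q) = qv p + qv q" by (simp add: qv_def qadd_def complex_eq_iff)
  then show ?thesis unfolding qnorm_qv by (metis norm_triangle_ineq)
qed

lemma qnorm_mult: "qnorm (qmult p q) = qnorm p * qnorm q"
proof -
  have "(qRe (qmult p q))\<^sup>2 + (qIm1 (qmult p q))\<^sup>2 + (qIm2 (qmult p q))\<^sup>2 + (qIm3 (qmult p q))\<^sup>2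
     = ((qRe p)\<^sup>2 + (qIm1 p)\<^sup>2 + (qIm2 p)\<^sup>2 + (qIm3 p)\<^sup>2) * ((qRe q)\<^sup>2 + (qIm1 q)\<^sup>2 + (qIm2 q)\<^sup>2 + (qIm3 q)\<^sup>2)"
    by (simp add: qmult_def power2_eq_square algebra_simps)
  then show ?thesis unfolding qnorm_def by (simp add: real_sqrt_mult)
qed

lemma qnorm_one: "qnorm qone = 1" by (simp add: qnorm_def qone_def)
lemma qnorm_zero: "qnorm qzero = 0" by (simp add: qnorm_def qzero_def)

lemma qnorm_pow: "qnorm (qpow q n) = qnorm q ^ n"
  by (induction n) (simp_all add: qnorm_one qnorm_mult)

lemma qnorm_pos: "p \<noteq> qzero \<Longrightarrow> qnorm p > 0"
proof -
  assume "p \<noteq> qzero"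
  then have "qv p \<noteq> 0" unfolding qv_def qzero_def
    by (cases p) (auto simp: complex_eq_iff zero_prod_def)
  then show ?thesis unfolding qnorm_qv by simp
qed

lemma foldr_bound:
  "qnorm (foldr (\<lambda>j acc. qadd (qmult (qpow q j) (a j)) acc) xs qzero)
    \<le> sum_list (map (\<lambda>j. qnorm q ^ j * qnorm (a j)) xs)"
proof (induction xs)
  case Nil then show ?case by (simp add: qnorm_zero)
next
  case (Cons x xs)
  show ?case using Cons qnorm_add[of "qmult (qpow q x) (a x)"]
    by (simp add: qnorm_mult qnorm_pow) (meson add_left_mono order_trans)
qed

lemma neg_eq: "qadd p s = qzero \<Longrightarrow> qnorm p = qnorm s"
  by (cases p; cases s) (auto simp: qadd_def qzero_def qnorm_def power2_eq_square add_eq_0_iff)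

lemma key:
  fixes x L :: real
  assumes L: "L > 0" and x: "x \<ge> 0" and r: "1 \<le> r" "r < n"
    and h: "x ^ n \<le> L ^ n * (\<Sum>j<Suc r. x ^ j)"
  shows "x \<le> L + max (L^2) (L^(r+1))"
proof (rule ccontr)
  define c where "c = max L (L^r)"
  assume "\<not> ?thesis"
  moreover have "L * c = max (L^2) (L^(r+1))" unfolding c_def using L
    by (simp add: power2_eq_square max_mult_distrib_left)
  ultimately have xg: "x > L + L * c" by simp
  define t where "t = x / L"
  have xt: "x = L * t" using L by (simp add: t_def)
  have c0: "c > 0" using L by (simp add: c_def)
  have tg: "t > 1 + c" using xg L xt
    by (metis distrib_left mult.right_neutral mult_less_cancel_left_pos)
  have t1: "t > 1" using tg c0 by simp
  have lc: "L ^ j \<le> c" if "1 \<le> j" "j \<le> r" for j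
  proof (cases "L \<le> 1")
    case True
    then have "L ^ j \<le> L ^ 1" using L that by (intro power_decreasing) auto
    then show ?thesis by (simp add: c_def)
  next
    case False
    then have "L ^ j \<le> L ^ r" using that by (intro power_increasing) auto
    then show ?thesis by (simp add: c_def)
  qed
  have "L ^ n * t ^ n = x ^ n" by (simp add: xt power_mult_distrib)
  also have "\<dots> \<le> L ^ n * (\<Sum>j<Suc r. L ^ j * t ^ j)" using h by (simp add: xt power_mult_distrib)
  finally have "t ^ n \<le> (\<Sum>j<Suc r. L ^ j * t ^ j)" using L by simp
  also have "(\<Sum>j<Suc r. L ^ j * t ^ j) = 1 + (\<Sum>j\<in>{1..r}. L ^ j * t ^ j)"
  proof -
    have "{..<Suc r} = insert 0 {1..r}" by auto
    then show ?thesis by simp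
  qed
  also have "(\<Sum>j\<in>{1..r}. L ^ j * t ^ j) \<le> (\<Sum>j\<in>{1..r}. c * t ^ j)"
    using t1 lc by (intro sum_mono mult_right_mono) auto
  finally have A: "t ^ n \<le> 1 + c * (\<Sum>j\<in>{1..r}. t ^ j)" by (simp add: sum_distrib_left)
  have S0: "(\<Sum>j\<in>{1..r}. t ^ j) > 0" using r t1 by (intro sum_pos) auto
  have "t ^ n - 1 = (t - 1) * (\<Sum>j<n. t ^ j)" by (rule power_diff_1_eq)
  also have "(\<Sum>j<n. t ^ j) \<ge> (\<Sum>j\<in>{1..r}. t ^ j)"
    using r t1 by (intro sum_mono2) auto
  then have "(t - 1) * (\<Sum>j<n. t ^ j) \<ge> (t - 1) * (\<Sum>j\<in>{1..r}. t ^ j)"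
    using t1 by (intro mult_left_mono) auto
  moreover have "(t - 1) * (\<Sum>j\<in>{1..r}. t ^ j) > c * (\<Sum>j\<in>{1..r}. t ^ j)"
    using S0 tg by (intro mult_strict_right_mono) auto
  ultimately show False using A by linarith
qed

theorem theorem4:
  fixes n r :: nat and a :: "nat \<Rightarrow> quat" and q :: quat
  assumes "n \<ge> 2" and "1 \<le> r" and "r \<le> n - 1"
    and "a r \<noteq> qzero"
    and "heval n r a q = qzero"
  shows "qnorm q \<le> root n (Max ((\<lambda>j. qnorm (a j)) ` {0..r}))
           + max ((root n (Max ((\<lambda>j. qnorm (a j)) ` {0..r})))\<^sup>2)
                 ((root n (Max ((\<lambda>j. qnorm (a j)) ` {0..r}))) ^ (r + 1))"
proof -
  define M where "M = Max ((\<lambda>j. qnorm (a j)) ` {0..r})"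
  have Mge: "qnorm (a j) \<le> M" if "j \<le> r" for j
    unfolding M_def using that by (intro Max_ge) auto
  have M0: "M > 0" using Mge[of r] qnorm_pos[OF assms(4)] by simp
  define L where "L = root n M"
  have n0: "n > 0" using assms by simp
  have L0: "L > 0" using M0 n0 by (simp add: L_def)
  have LM: "L ^ n = M" using M0 n0 by (simp add: L_def)
  have "qnorm q ^ n = qnorm (foldr (\<lambda>j acc. qadd (qmult (qpow q j) (a j)) acc) [0..<Suc r] qzero)"
    using assms(5) unfolding heval_def by (metis neg_eq qnorm_pow)
  also have "\<dots> \<le> sum_list (map (\<lambda>j. qnorm q ^ j * qnorm (a j)) [0..<Suc r])"
    by (rule foldr_bound)
  also have "\<dots> = (\<Sum>j<Suc r. qnorm q ^ j * qnorm (a j))"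
    by (simp add: interv_sum_list_conv_sum_set_nat lessThan_atLeast0)
  also have "\<dots> \<le> (\<Sum>j<Suc r. qnorm q ^ j * M)"
    using Mge by (intro sum_mono mult_left_mono) (auto simp: qnorm_def)
  also have "\<dots> = L ^ n * (\<Sum>j<Suc r. qnorm q ^ j)"
    by (simp only: LM sum_distrib_left mult.commute)
  finally have "qnorm q ^ n \<le> L ^ n * (\<Sum>j<Suc r. qnorm q ^ j)" .
  have "qnorm q \<le> L + max (L^2) (L^(r+1))"
  proof -
    have q0: "0 \<le> qnorm q" by (simp add: qnorm_def)
    have rn: "r < n" using assms by simp
    show ?thesis using key[OF L0 q0 assms(2) rn] \<open>qnorm q ^ n \<le> _\<close> by blast
  qed
  then show ?thesis unfolding L_def M_def .
qed

end
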